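(* Let $\mathcal{B}\subseteq\mathcal{P}(X)$ be an admissible algebra containing $\mathcal{A}_0$. Let $\{\nu_k\}_{k\in\omega}$ be a sequence of (finitely additive) probability measures on $\mathcal{P}(X)$ such that (i) each $\nu_k$ is supported by a finite subset of $X$, and (ii) $\lim_k\nu_k(B)=\mu(B)$ for every $B\in\mathcal{B}$. Let $B_0\in\mathcal{B}$ be such that $\mu(B_0)>0$. Then there is $A\subseteq B_0$ such that the algebra generated by $\mathcal{B}\cup\{A\}$ is admissible and $\{\nu_k(A)\}_{k\in\omega}$ does not converge to $\mu(A)$.
   Context: $\omega=\{0,1,2,\dots\}$, $2^\omega$ is the Cantor set, $\lambda$ is the usual product probability measure on $2^\omega$, and $\mathrm{Clop}(2^\omega)$ is the algebra of clopen subsets of $2^\omega$. Let $X=\omega\times 2^\omega$. For $B\subseteq X$ and $n\in\omega$, $B_{|n}=\{t\in 2^\omega:(n,t)\in B\}$. A set $B\subseteq X$ is admissible if $B_{|n}\in\mathrm{Clop}(2^\omega)$ for all $n\in\omega$ and $\lim_n\lambda(B_{|n})$ exists; in that case $\mu(B):=\lim_n\lambda(B_{|n})$. An algebra of subsets of $X$ is admissible if all its elements are admissible. $\mathcal{A}_0$ is the algebra of subsets of $X$ generated by all products $A\times C$ with $A\subseteq\omega$ finite or cofinite and $C\in\mathrm{Clop}(2^\omega)$. *)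

theory Defs
  imports "HOL-Analysis.Analysis" "HOL-Probability.Probability"
begin

type_synonym cantor = "nat \<Rightarrow> bool"
type_synonym X = "nat \<times> cantor"

definition Clop :: "cantor set set" where
  "Clop = {C. open C \<and> closed C}"

definition cantor_measure :: "cantor measure" where
  "cantor_measure = (\<Pi>\<^sub>M i\<in>(UNIV::nat set). measure_pmf (bernoulli_pmf (1/2)))"

definition lam :: "cantor set \<Rightarrow> real" where
  "lam C = measure cantor_measure C"

definition section_at :: "X set \<Rightarrow> nat \<Rightarrow> cantor set" where
  "section_at B n = {t. (n, t) \<in> B}"

definition admissible :: "X set \<Rightarrow> bool" where
  "admissible B \<longleftrightarrow> (\<forall>n. section_at B n \<in> Clop) \<and> convergent (\<lambda>n. lam (section_at B n))"

definition mu :: "X set \<Rightarrow> real" where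
  "mu B = lim (\<lambda>n. lam (section_at B n))"

definition admissible_algebra :: "X set set \<Rightarrow> bool" where
  "admissible_algebra \<B> \<longleftrightarrow> algebra UNIV \<B> \<and> (\<forall>B\<in>\<B>. admissible B)"

definition gen_algebra :: "X set set \<Rightarrow> X set set" where
  "gen_algebra S = \<Inter>{\<A>. algebra UNIV \<A> \<and> S \<subseteq> \<A>}"

definition A0 :: "X set set" where
  "A0 = gen_algebra {A \<times> C | A C. (finite A \<or> finite (- A)) \<and> C \<in> Clop}"

definition fa_prob :: "(X set \<Rightarrow> real) \<Rightarrow> bool" where
  "fa_prob \<nu> \<longleftrightarrow> (\<forall>A. \<nu> A \<ge> 0) \<and> \<nu> UNIV = 1 \<and>
     (\<forall>A B. A \<inter> B = {} \<longrightarrow> \<nu> (A \<union> B) = \<nu> A + \<nu> B)"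

definition finitely_supported :: "(X set \<Rightarrow> real) \<Rightarrow> bool" where
  "finitely_supported \<nu> \<longleftrightarrow> (\<exists>F. finite F \<and> \<nu> F = 1)"

end

theory Submission imports Defs begin
instance bool :: second_countable_topology
proof
  show "\<exists>B::bool set set. countable B \<and> open = generate_topology B"
  proof (intro exI conjI)
    show "countable (UNIV :: bool set set)" by simp
    show "open = generate_topology (UNIV :: bool set set)"
      by (intro ext iffI) (simp_all add: generate_topology.Basis discrete_topology_class.open_discrete)
  qed
qed

lemma space_cantor[simp]: "space cantor_measure = UNIV"
  by (simp add: cantor_measure_def space_PiM)

lemma prob_cantor: "prob_space cantor_measure"
  unfolding cantor_measure_def
  by (rule prob_space_PiM) (simp add: prob_space_measure_pmf)

lemma sets_bool_borel: "sets (borel :: bool measure) = UNIV"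
  using borel_open[of "A::bool set" for A] by (auto simp: discrete_topology_class.open_discrete)

lemma sets_cantor: "sets cantor_measure = sets (borel :: cantor measure)"
proof -
  have "sets cantor_measure = sets (Pi\<^sub>M (UNIV::nat set) (\<lambda>_. borel :: bool measure))"
    unfolding cantor_measure_def
    by (rule sets_PiM_cong) (simp_all add: sets_bool_borel)
  also have "\<dots> = sets borel" by (rule sets_PiM_equal_borel)
  finally show ?thesis .
qed

lemma Clop_sets: "C \<in> Clop \<Longrightarrow> C \<in> sets cantor_measure"
  unfolding sets_cantor Clop_def by auto

lemma Clop_Int: "A \<in> Clop \<Longrightarrow> B \<in> Clop \<Longrightarrow> A \<inter> B \<in> Clop"
  by (auto simp: Clop_def)
lemma Clop_Un: "A \<in> Clop \<Longrightarrow> B \<in> Clop \<Longrightarrow> A \<union> B \<in> Clop"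
  by (auto simp: Clop_def)
lemma Clop_Diff: "A \<in> Clop \<Longrightarrow> B \<in> Clop \<Longrightarrow> A - B \<in> Clop"
  by (auto simp: Clop_def open_Diff closed_Diff)
lemma Clop_empty: "{} \<in> Clop"
  by (auto simp: Clop_def)
lemma Clop_UNIV: "UNIV \<in> Clop"
  by (auto simp: Clop_def)

definition cyl :: "cantor \<Rightarrow> nat \<Rightarrow> cantor set" where
  "cyl p m = {t. \<forall>i\<in>{..<m}. t i \<in> {p i}}"

lemma cyl_Clop: "cyl p m \<in> Clop"
proof -
  have eq: "cyl p m = (\<Inter>i\<in>{..<m}. (\<lambda>t. t i) -` {p i})"
    by (auto simp: cyl_def)
  have o: "open ((\<lambda>t::cantor. t i) -` {p i})" for i
    by (rule open_vimage) (auto simp: discrete_topology_class.open_discrete)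
  have c: "closed ((\<lambda>t::cantor. t i) -` {p i})" for i
    by (rule closed_vimage) (auto simp: closed_def discrete_topology_class.open_discrete)
  show ?thesis unfolding eq Clop_def using o c by (auto intro!: open_INT closed_INT)
qed

lemma lam_cyl: "lam (cyl p m) = (1/2)^m"
proof -
  interpret product_prob_space "\<lambda>_::nat. measure_pmf (bernoulli_pmf (1/2))" UNIV
    by unfold_locales
  have "emeasure cantor_measure (cyl p m) = (\<Prod>i\<in>{..<m}. emeasure (measure_pmf (bernoulli_pmf (1/2))) {p i})"
    using emeasure_PiM_Collect[of "{..<m}" "\<lambda>i. {p i}"]
    by (simp add: cantor_measure_def cyl_def space_PiM)
  also have "\<dots> = (\<Prod>i\<in>{..<m}. ennreal (1/2))"
    by (rule prod.cong[OF refl]) (cases "p i"; simp add: emeasure_pmf_single)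
  also have "\<dots> = ennreal ((1/2)^m)"
    by (subst prod_ennreal) auto
  finally show ?thesis unfolding lam_def
    by (simp add: measure_def)
qed

lemma lam_close:
  assumes X: "X \<in> Clop" and Y: "Y \<in> Clop" and Dc: "D \<in> Clop"
    and s1: "X - Y \<subseteq> D" and s2: "Y - X \<subseteq> D"
  shows "\<bar>lam X - lam Y\<bar> \<le> lam D"
proof -
  interpret prob_space cantor_measure by (rule prob_cantor)
  have m: "X \<in> sets cantor_measure" "Y \<in> sets cantor_measure" "D \<in> sets cantor_measure"
    using X Y Dc Clop_sets by auto
  have "lam X \<le> lam (Y \<union> D)"
    unfolding lam_def using s1 m by (intro finite_measure_mono) auto
  also have "\<dots> \<le> lam Y + lam D"
    unfolding lam_def using m by (intro measure_Un_le) auto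
  finally have 1: "lam X \<le> lam Y + lam D" .
  have "lam Y \<le> lam (X \<union> D)"
    unfolding lam_def using s2 m by (intro finite_measure_mono) auto
  also have "\<dots> \<le> lam X + lam D"
    unfolding lam_def using m by (intro measure_Un_le) auto
  finally have 2: "lam Y \<le> lam X + lam D" .
  from 1 2 show ?thesis by linarith
qed

lemma lam_nonneg: "lam X \<ge> 0"
  by (simp add: lam_def)

lemma approx:
  assumes T: "admissible T" and S: "\<And>n. section_at S n \<in> Clop"
    and D: "\<And>n. D n \<in> Clop" and Dl: "(\<lambda>n. lam (D n)) \<longlonglongrightarrow> 0"
    and s1: "\<And>n. section_at S n - section_at T n \<subseteq> D n"
    and s2: "\<And>n. section_at T n - section_at S n \<subseteq> D n"
  shows "admissible S \<and> mu S = mu T"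
proof -
  have Tc: "\<And>n. section_at T n \<in> Clop" and cv: "convergent (\<lambda>n. lam (section_at T n))"
    using T by (auto simp: admissible_def)
  have lT: "(\<lambda>n. lam (section_at T n)) \<longlonglongrightarrow> mu T"
    using cv unfolding mu_def by (simp add: convergent_LIMSEQ_iff)
  have "(\<lambda>n. lam (section_at S n) - lam (section_at T n)) \<longlonglongrightarrow> 0"
    by (rule Lim_null_comparison[OF _ Dl]) (auto intro!: always_eventually lam_close S Tc D s1 s2)
  from tendsto_add[OF lT this] have lS: "(\<lambda>n. lam (section_at S n)) \<longlonglongrightarrow> mu T"
    by simp
  then have "convergent (\<lambda>n. lam (section_at S n))" by (auto simp: convergent_def)
  moreover have "mu S = mu T" using limI[OF lS] by (simp add: mu_def)
  ultimately show ?thesis using S by (auto simp: admissible_def)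
qed

lemma gen_algebra_algebra: "algebra UNIV (gen_algebra S)"
  unfolding gen_algebra_def algebra_iff_Un by auto

lemma gen_algebra_sub: "S \<subseteq> gen_algebra S"
  unfolding gen_algebra_def by auto

lemma gen_algebra_least: "algebra UNIV E \<Longrightarrow> S \<subseteq> E \<Longrightarrow> gen_algebra S \<subseteq> E"
  unfolding gen_algebra_def by auto

lemma sec_Int: "section_at (A \<inter> B) n = section_at A n \<inter> section_at B n"
  and sec_Un: "section_at (A \<union> B) n = section_at A n \<union> section_at B n"
  and sec_Diff: "section_at (A - B) n = section_at A n - section_at B n"
  by (auto simp: section_at_def)

lemma key:
  assumes alg: "admissible_algebra \<B>" and B0: "B0 \<in> \<B>"
    and D: "\<And>n. D n \<in> Clop" and Dl: "(\<lambda>n. lam (D n)) \<longlonglongrightarrow> 0"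
    and Adef: "A = {x \<in> B0. snd x \<notin> D (fst x)}"
  shows "admissible_algebra (gen_algebra (insert A \<B>))" and "mu A = mu B0"
proof -
  interpret algebra UNIV \<B> using alg by (simp add: admissible_algebra_def)
  have adm: "\<And>B. B \<in> \<B> \<Longrightarrow> admissible B" using alg by (simp add: admissible_algebra_def)
  have secC: "\<And>B n. B \<in> \<B> \<Longrightarrow> section_at B n \<in> Clop" using adm by (simp add: admissible_def)
  have secA: "section_at A n = section_at B0 n - D n" for n
    by (auto simp: Adef section_at_def)
  define E where "E = {(B1 \<inter> A) \<union> (B2 - A) | B1 B2. B1 \<in> \<B> \<and> B2 \<in> \<B>}"
  have admE: "admissible S \<and> mu S = mu ((B1 \<inter> B0) \<union> (B2 - B0))"
    if "S = (B1 \<inter> A) \<union> (B2 - A)" "B1 \<in> \<B>" "B2 \<in> \<B>" for S B1 B2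
  proof (rule approx[OF _ _ D Dl])
    show "admissible ((B1 \<inter> B0) \<union> (B2 - B0))"
      using that B0 by (intro adm) auto
    show "section_at S n \<in> Clop" for n
      unfolding that sec_Int sec_Un sec_Diff secA
      using that B0 D by (intro Clop_Int Clop_Un Clop_Diff secC) auto
    show "section_at S n - section_at (B1 \<inter> B0 \<union> (B2 - B0)) n \<subseteq> D n" for n
      unfolding that sec_Int sec_Un sec_Diff secA by auto
    show "section_at (B1 \<inter> B0 \<union> (B2 - B0)) n - section_at S n \<subseteq> D n" for n
      unfolding that sec_Int sec_Un sec_Diff secA by auto
  qed
  have algE: "algebra UNIV E"
    unfolding algebra_iff_Un
  proof (intro conjI ballI)
    show "E \<subseteq> Pow UNIV" by simp
    show "{} \<in> E" unfolding E_def by (intro CollectI exI[of _ "{}"]) auto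
    fix a assume "a \<in> E"
    then obtain B1 B2 where a: "a = (B1 \<inter> A) \<union> (B2 - A)" "B1 \<in> \<B>" "B2 \<in> \<B>"
      unfolding E_def by auto
    show "UNIV - a \<in> E" unfolding E_def
      by (intro CollectI exI[of _ "UNIV - B1"] exI[of _ "UNIV - B2"]) (auto simp: a)
    fix b assume "b \<in> E"
    then obtain C1 C2 where b: "b = (C1 \<inter> A) \<union> (C2 - A)" "C1 \<in> \<B>" "C2 \<in> \<B>"
      unfolding E_def by auto
    show "a \<union> b \<in> E" unfolding E_def
      by (intro CollectI exI[of _ "B1 \<union> C1"] exI[of _ "B2 \<union> C2"]) (auto simp: a b)
  qed
  have sub: "insert A \<B> \<subseteq> E"
  proof
    fix x assume "x \<in> insert A \<B>"
    then show "x \<in> E"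
    proof
      assume "x = A" then show ?thesis unfolding E_def
        by (intro CollectI exI[of _ UNIV] exI[of _ "{}"]) auto
    next
      assume "x \<in> \<B>" then show ?thesis unfolding E_def
        by (intro CollectI exI[of _ x] exI[of _ x]) auto
    qed
  qed
  have "gen_algebra (insert A \<B>) \<subseteq> E" by (rule gen_algebra_least[OF algE sub])
  moreover have "\<forall>S\<in>E. admissible S" unfolding E_def using admE by blast
  ultimately show "admissible_algebra (gen_algebra (insert A \<B>))"
    unfolding admissible_algebra_def using gen_algebra_algebra by blast
  have "mu A = mu ((UNIV \<inter> B0) \<union> ({} - B0))"
    using admE[of A UNIV "{}"] by auto
  then show "mu A = mu B0" by simp
qed

lemma fa_add: "fa_prob \<nu> \<Longrightarrow> A \<inter> B = {} \<Longrightarrow> \<nu> (A \<union> B) = \<nu> A + \<nu> B"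
  unfolding fa_prob_def by blast

lemma fa_nn: "fa_prob \<nu> \<Longrightarrow> \<nu> A \<ge> 0"
  unfolding fa_prob_def by blast

lemma fa_mono: "fa_prob \<nu> \<Longrightarrow> X \<subseteq> Y \<Longrightarrow> \<nu> X \<le> \<nu> Y"
proof -
  assume f: "fa_prob \<nu>" and s: "X \<subseteq> Y"
  have e: "X \<union> (Y - X) = Y" using s by blast
  have "\<nu> (X \<union> (Y - X)) = \<nu> X + \<nu> (Y - X)" by (rule fa_add[OF f]) blast
  then have "\<nu> Y = \<nu> X + \<nu> (Y - X)" by (simp only: e)
  moreover have "\<nu> (Y - X) \<ge> 0" by (rule fa_nn[OF f])
  ultimately show ?thesis by linarith
qed

lemma fa_split: "fa_prob \<nu> \<Longrightarrow> \<nu> A = \<nu> (A \<inter> F) + \<nu> (A - F)"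
proof -
  assume f: "fa_prob \<nu>"
  have e: "(A \<inter> F) \<union> (A - F) = A" by blast
  have "\<nu> ((A \<inter> F) \<union> (A - F)) = \<nu> (A \<inter> F) + \<nu> (A - F)" by (rule fa_add[OF f]) blast
  then show ?thesis by (simp only: e)
qed

lemma fa_compl: "fa_prob \<nu> \<Longrightarrow> \<nu> F = 1 \<Longrightarrow> \<nu> (- F) = 0"
proof -
  assume f: "fa_prob \<nu>" and F: "\<nu> F = 1"
  have e: "F \<union> - F = UNIV" by blast
  have "\<nu> (F \<union> - F) = \<nu> F + \<nu> (- F)" by (rule fa_add[OF f]) blast
  moreover have "\<nu> UNIV = 1" using f by (simp add: fa_prob_def)
  ultimately show ?thesis using F using e by simp
qed

lemma cols_A0: "{..<j} \<times> (UNIV::cantor set) \<in> A0"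
proof -
  have "{..<j} \<times> (UNIV::cantor set) \<in> {A \<times> C | A C. (finite A \<or> finite (- A)) \<and> C \<in> Clop}"
    apply (rule CollectI)
    apply (rule exI[of _ "{..<j}"])
    apply (rule exI[of _ UNIV])
    by (intro conjI refl disjI1 finite_lessThan Clop_UNIV)
  then show ?thesis unfolding A0_def by (rule subsetD[OF gen_algebra_sub])
qed

lemma mu_cols: "mu ({..<j} \<times> (UNIV::cantor set)) = 0"
proof -
  have e: "section_at ({..<j} \<times> (UNIV::cantor set)) n = {}" if "j \<le> n" for n
    using that by (auto simp: section_at_def)
  have "(\<lambda>n. lam (section_at ({..<j} \<times> (UNIV::cantor set)) n)) \<longlonglongrightarrow> 0"
  proof (rule tendsto_eventually)
    show "\<forall>\<^sub>F n in sequentially. lam (section_at ({..<j} \<times> UNIV) n) = 0"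
      using eventually_ge_at_top[of j]
      by (rule eventually_mono) (simp add: e lam_def)
  qed
  then show ?thesis unfolding mu_def by (rule limI)
qed
lemma pow_bound: "real c * (1/2)^(c+n) \<le> (1/2::real)^n"
proof -
  have "real c \<le> 2^c" using less_exp[of c]
    by (metis less_imp_le of_nat_le_iff of_nat_numeral of_nat_power)
  then have "real c * (1/2)^c \<le> 1" by (simp add: power_one_over field_simps)
  then have "real c * (1/2)^c * (1/2)^n \<le> (1/2::real)^n"
    by (simp add: mult_left_le_one_le)
  then show ?thesis by (simp add: power_add mult.assoc)
qed

theorem lemma2p6:
  fixes \<B> :: "X set set" and \<nu> :: "nat \<Rightarrow> X set \<Rightarrow> real" and B0 :: "X set"
  assumes "admissible_algebra \<B>"
    and "A0 \<subseteq> \<B>"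
    and "\<forall>k. fa_prob (\<nu> k)"
    and "\<forall>k. finitely_supported (\<nu> k)"
    and "\<forall>B\<in>\<B>. (\<lambda>k. \<nu> k B) \<longlonglongrightarrow> mu B"
    and "B0 \<in> \<B>"
    and "mu B0 > 0"
  shows "\<exists>A. A \<subseteq> B0 \<and> admissible_algebra (gen_algebra (insert A \<B>))
             \<and> \<not> ((\<lambda>k. \<nu> k A) \<longlonglongrightarrow> mu A)"
proof -
  note alg = assms(1) and A0B = assms(2) and fa = assms(3) and fs = assms(4)
    and lim = assms(5) and B0 = assms(6) and pos = assms(7)
  define C where "C j = {..<j::nat} \<times> (UNIV::cantor set)" for j
  have Clim: "(\<lambda>k. \<nu> k (C j)) \<longlonglongrightarrow> 0" for j
  proof -
    have "C j \<in> \<B>" unfolding C_def by (rule subsetD[OF A0B cols_A0])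
    then show ?thesis using lim mu_cols[of j] unfolding C_def by auto
  qed
  have ex: "\<exists>k. j \<le> k \<and> \<nu> k (C j) < 1 / (real j + 1)" for j
  proof -
    have "\<forall>\<^sub>F k in sequentially. \<nu> k (C j) < 1 / (real j + 1)"
      using order_tendstoD(2)[OF Clim[of j], of "1 / (real j + 1)"] by simp
    moreover have "\<forall>\<^sub>F k in sequentially. j \<le> k" by (rule eventually_ge_at_top)
    ultimately have "\<forall>\<^sub>F k in sequentially. j \<le> k \<and> \<nu> k (C j) < 1 / (real j + 1)"
      by eventually_elim auto
    then show ?thesis using eventually_sequentially by fastforce
  qed
  define kk where "kk j = (SOME k. j \<le> k \<and> \<nu> k (C j) < 1 / (real j + 1))" for j
  have kk: "j \<le> kk j" "\<nu> (kk j) (C j) < 1 / (real j + 1)" for j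
    using someI_ex[OF ex[of j]] unfolding kk_def by auto
  have exF: "\<exists>F. finite F \<and> \<nu> (kk j) F = 1" for j
    using fs by (simp add: finitely_supported_def)
  define F where "F j = (SOME F. finite F \<and> \<nu> (kk j) F = 1)" for j
  have F: "finite (F j)" "\<nu> (kk j) (F j) = 1" for j
    using someI_ex[OF exF[of j]] unfolding F_def by auto
  define G where "G = (\<Union>j. F j \<inter> ({j..} \<times> UNIV))"
  define P where "P n = section_at G n" for n
  have Pfin: "finite (P n)" for n
  proof -
    have "P n \<subseteq> (\<Union>j\<in>{..n}. Pair n -` F j)"
      by (auto simp: P_def G_def section_at_def)
    moreover have "finite (\<Union>j\<in>{..n}. Pair n -` F j)"
      using F(1) by (intro finite_UN_I) (auto intro: finite_vimageI simp: inj_on_def)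
    ultimately show ?thesis by (rule finite_subset)
  qed
  define D where "D n = (\<Union>p\<in>P n. cyl p (card (P n) + n))" for n
  have DC: "D n \<in> Clop" for n
    using cyl_Clop[unfolded Clop_def] Pfin[of n]
    by (auto simp: D_def Clop_def intro!: open_UN closed_UN)
  have Dle: "lam (D n) \<le> (1/2)^n" for n
  proof -
    interpret prob_space cantor_measure by (rule prob_cantor)
    have "lam (D n) \<le> (\<Sum>p\<in>P n. lam (cyl p (card (P n) + n)))"
      unfolding D_def lam_def
      using Pfin[of n] Clop_sets[OF cyl_Clop]
      by (intro finite_measure_subadditive_finite) auto
    also have "\<dots> = real (card (P n)) * (1/2)^(card (P n) + n)"
      by (simp add: lam_cyl)
    also have "\<dots> \<le> (1/2)^n" by (rule pow_bound)
    finally show ?thesis .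
  qed
  have Dl: "(\<lambda>n. lam (D n)) \<longlonglongrightarrow> 0"
    by (rule Lim_null_comparison[OF _ LIMSEQ_power_zero[of "1/2::real"]])
       (auto intro!: always_eventually simp: lam_nonneg Dle)
  define A where "A = {x \<in> B0. snd x \<notin> D (fst x)}"
  have admA: "admissible_algebra (gen_algebra (insert A \<B>))" and muA: "mu A = mu B0"
    using key[OF alg B0 DC Dl A_def] by auto
  have bound: "\<nu> (kk j) A \<le> 1 / (real j + 1)" for j
  proof -
    have f: "fa_prob (\<nu> (kk j))" using fa by simp
    have "A \<inter> F j \<subseteq> C j"
    proof
      fix x assume x: "x \<in> A \<inter> F j"
      obtain n t where xe: "x = (n, t)" by fastforce
      show "x \<in> C j"
      proof (rule ccontr)
        assume "x \<notin> C j"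
        then have "j \<le> n" by (auto simp: C_def xe)
        then have "t \<in> P n" using x by (auto simp: P_def G_def section_at_def xe)
        then have "t \<in> D n" by (auto simp: D_def cyl_def)
        then show False using x by (auto simp: A_def xe)
      qed
    qed
    then have 1: "\<nu> (kk j) (A \<inter> F j) \<le> \<nu> (kk j) (C j)" by (rule fa_mono[OF f])
    have "\<nu> (kk j) (A - F j) \<le> \<nu> (kk j) (- F j)" by (rule fa_mono[OF f]) auto
    also have "\<dots> = 0" by (rule fa_compl[OF f F(2)])
    finally have 2: "\<nu> (kk j) (A - F j) \<le> 0" .
    have "\<nu> (kk j) A = \<nu> (kk j) (A \<inter> F j) + \<nu> (kk j) (A - F j)" by (rule fa_split[OF f])
    then show ?thesis using 1 2 kk(2)[of j] by linarith
  qed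
  have nn: "\<nu> (kk j) A \<ge> 0" for j using fa by (simp add: fa_prob_def)
  have to0: "(\<lambda>j. \<nu> (kk j) A) \<longlonglongrightarrow> 0"
  proof (rule Lim_null_comparison[OF _ LIMSEQ_inverse_real_of_nat])
    show "\<forall>\<^sub>F j in sequentially. norm (\<nu> (kk j) A) \<le> inverse (real (Suc j))"
      using bound nn by (auto intro!: always_eventually simp: inverse_eq_divide add.commute)
  qed
  have "\<not> ((\<lambda>k. \<nu> k A) \<longlonglongrightarrow> mu A)"
  proof
    assume "(\<lambda>k. \<nu> k A) \<longlonglongrightarrow> mu A"
    moreover have "filterlim kk sequentially sequentially"
      by (rule filterlim_at_top_mono[OF filterlim_ident]) (auto intro!: always_eventually kk(1))
    ultimately have "(\<lambda>j. \<nu> (kk j) A) \<longlonglongrightarrow> mu A" by (rule filterlim_compose)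
    then have "mu A = 0" using to0 LIMSEQ_unique by blast
    then show False using muA pos by simp
  qed
  moreover have "A \<subseteq> B0" by (auto simp: A_def)
  ultimately show ?thesis using admA by blast
qed

end
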